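(* Over $R=\mathbb{F}_2$ with $F=\hat{\mathbb{G}}_a$ and $G=\hat{\mathbb{G}}_m$, let $i\ne j$. In order for the class $c\,a_ia_j$ (with coefficient $c$) to extend to a multiplicative cocycle, it is necessary that $c^2=0$.
   Context: $\hat{\mathbb{G}}_a$ is the formal group law $x+y$ and $\hat{\mathbb{G}}_m$ is $x+y+xy$. The Lubin–Tate cohomology $H^*(F;G)(R)$ is the cohomology of the complex of power series $F^{\times n}\to G$ with the alternating coboundary built from the group laws. Filtering by leading total degree gives the tangent spectral sequence $H^*(\hat{\mathbb{G}}_a;\hat{\mathbb{G}}_a)(R)\Rightarrow H^*(\hat{\mathbb{G}}_a;\hat{\mathbb{G}}_m)(R)$; "extending to a multiplicative cocycle" means being the leading (lowest-degree homogeneous) additive part of a multiplicative cocycle, i.e. surviving this spectral sequence. Over $\mathbb{F}_2$, $a_i\in H^1(\hat{\mathbb{G}}_a;\hat{\mathbb{G}}_a)$ is the class of $x^{2^i}$ and $a_ia_j\in H^2$ is the class of $x^{2^i}y^{2^j}$. *)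

theory Defs
  imports Main "HOL-Library.Z2"
begin

text \<open>Formal power series in 2 (resp. 3) variables over a commutative ring,
  represented by their coefficient functions: f a b is the coefficient of
  x^a y^b, and g a b c the coefficient of x^a y^b z^c.\<close>

type_synonym 'r ps2 = "nat \<Rightarrow> nat \<Rightarrow> 'r"
type_synonym 'r ps3 = "nat \<Rightarrow> nat \<Rightarrow> nat \<Rightarrow> 'r"

definition ps3_mult :: "'r::comm_ring_1 ps3 \<Rightarrow> 'r ps3 \<Rightarrow> 'r ps3" where
  "ps3_mult g h = (\<lambda>a b c. \<Sum>a'\<le>a. \<Sum>b'\<le>b. \<Sum>c'\<le>c.
      g a' b' c' * h (a - a') (b - b') (c - c'))"

text \<open>The multiplicative formal group law x +_G y = x + y + xy on 3-variable series.\<close>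
definition gm_add3 :: "'r::comm_ring_1 ps3 \<Rightarrow> 'r ps3 \<Rightarrow> 'r ps3" where
  "gm_add3 g h = (\<lambda>a b c. g a b c + h a b c + ps3_mult g h a b c)"

text \<open>Substitutions (F is the additive formal group, so x +_F y = x + y).\<close>
definition sub_yz :: "'r::comm_ring_1 ps2 \<Rightarrow> 'r ps3" where
  "sub_yz f = (\<lambda>a b c. if a = 0 then f b c else 0)"
definition sub_xy_z :: "'r::comm_ring_1 ps2 \<Rightarrow> 'r ps3" where  \<comment> \<open>f(x+y,z)\<close>
  "sub_xy_z f = (\<lambda>a b c. of_nat ((a + b) choose a) * f (a + b) c)"
definition sub_x_yz :: "'r::comm_ring_1 ps2 \<Rightarrow> 'r ps3" where  \<comment> \<open>f(x,y+z)\<close>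
  "sub_x_yz f = (\<lambda>a b c. of_nat ((b + c) choose b) * f a (b + c))"
definition sub_xy :: "'r::comm_ring_1 ps2 \<Rightarrow> 'r ps3" where
  "sub_xy f = (\<lambda>a b c. if c = 0 then f a b else 0)"

text \<open>A 2-cocycle in the Lubin-Tate complex for F = additive, G = multiplicative:
  a power series f(x,y) without constant term with
  f(y,z) -_G f(x+y,z) +_G f(x,y+z) -_G f(x,y) = 0, equivalently (G abelian)
  f(y,z) +_G f(x,y+z) = f(x+y,z) +_G f(x,y).\<close>
definition Ga_Gm_cocycle2 :: "'r::comm_ring_1 ps2 \<Rightarrow> bool" where
  "Ga_Gm_cocycle2 f \<longleftrightarrow> f 0 0 = 0 \<and>
     gm_add3 (sub_yz f) (sub_x_yz f) = gm_add3 (sub_xy_z f) (sub_xy f)"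

text \<open>Additive coboundary of the 1-cochain e x^d: e (y^d - (x+y)^d + x^d).\<close>
definition add_cobdry_monom :: "'r::comm_ring_1 \<Rightarrow> nat \<Rightarrow> 'r ps2" where
  "add_cobdry_monom e d = (\<lambda>a b. if a + b = d then
      e * (of_bool (a = 0) - of_nat (d choose a) + of_bool (b = 0)) else 0)"

text \<open>The additive class c a_i a_j (represented by c x^(2^i) y^(2^j), up to additive
  coboundaries in the same degree) extends to a multiplicative cocycle: there is a
  multiplicative cocycle whose lowest-degree homogeneous part represents this class.\<close>
definition extends_to_mult_cocycle :: "'r::comm_ring_1 \<Rightarrow> nat \<Rightarrow> nat \<Rightarrow> bool" where
  "extends_to_mult_cocycle c i j \<longleftrightarrow>
     (\<exists>f e. Ga_Gm_cocycle2 f \<and>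
        (\<forall>a b. a + b < 2^i + 2^j \<longrightarrow> f a b = 0) \<and>
        (\<forall>a b. a + b = 2^i + 2^j \<longrightarrow>
           f a b = c * of_bool (a = 2^i \<and> b = 2^j) + add_cobdry_monom e (2^i + 2^j) a b))"

end

theory Submission imports Defs "HOL-Computational_Algebra.Polynomial" begin

lemma bit_of_nat: "(of_nat n :: bit) = of_bool (odd n)"
  by (induction n) auto

lemma bin_coeff: "(of_nat (n choose k) :: bit) = coeff ([:1,1:]^n) k"
proof (cases "k \<le> n")
  case True then show ?thesis using coeff_linear_poly_power[of k n 1 1]
    by (metis mult.right_neutral power_one)
next
  case False
  have "degree ([:1::bit,1:]^n) \<le> n"
    by (metis degree_linear_power order_refl) 
  then show ?thesis using False by (simp add: coeff_eq_0 binomial_eq_0)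
qed

lemma two_bitpoly: "(2::bit poly) = 0"
  using numeral_poly[where n = "Num.Bit0 Num.One" and 'a = bit] by simp

lemma sq_add_bitpoly: "((p::bit poly) + q)^2 = p^2 + q^2"
proof -
  have "(p+q)^2 = p^2 + 2*p*q + q^2" by (simp add: power2_eq_square algebra_simps)
  then show ?thesis by (simp add: two_bitpoly)
qed

lemma frob: "([:1,1:]::bit poly)^(2^m) = 1 + monom 1 (2^m)"
proof (induction m)
  case 0
  then show ?case by (simp add: monom_Suc one_pCons)
next
  case (Suc m)
  have "([:1,1:]::bit poly)^(2^Suc m) = (([:1,1:]::bit poly)^(2^m))^2"
    by (simp add: power_mult[symmetric] mult.commute)
  also have "\<dots> = (1 + monom 1 (2^m))^2" using Suc by simp
  also have "\<dots> = 1 + (monom 1 (2^m))^2" by (simp add: sq_add_bitpoly)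
  also have "\<dots> = 1 + monom 1 (2^Suc m)"
    by (simp add: power2_eq_square mult_monom mult_2)
  finally show ?case .
qed

lemma luc1: "(of_nat (2^m choose k)::bit) = of_bool (k=0) + of_bool (k=2^m)"
  by (simp add: bin_coeff frob coeff_monom)

lemma luc2:
  assumes "m \<noteq> n"
  shows "(of_nat ((2^m+2^n) choose k)::bit) = of_bool (k=0) + of_bool (k=2^m) + of_bool (k=2^n) + of_bool (k=2^m+2^n)"
proof -
  have ne: "(2::nat)^m \<noteq> 2^n" using assms by simp
  have "([:1,1:]::bit poly)^(2^m+2^n) = (1 + monom 1 (2^m)) * (1 + monom 1 (2^n))"
    by (simp add: power_add frob)
  also have "\<dots> = 1 + monom 1 (2^m) + monom 1 (2^n) + monom 1 (2^m+2^n)"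
    by (simp add: algebra_simps mult_monom)
  finally show ?thesis using ne by (simp add: bin_coeff coeff_monom coeff_1)
qed

lemma sum_single:
  fixes q P :: nat
  assumes "\<And>x. x \<le> q \<Longrightarrow> x \<noteq> P \<Longrightarrow> F x = 0" and "P \<le> q"
  shows "(\<Sum>x\<le>q. F x) = F P"
proof -
  have "(\<Sum>x\<le>q. F x) = (\<Sum>x\<in>{P}. F x)"
    by (rule sum.mono_neutral_right) (use assms in auto)
  then show ?thesis by simp
qed

lemma Q1:
  fixes f :: "bit ps2" and g :: "nat \<Rightarrow> bit"
  assumes F0: "\<And>a b. a+b<d \<Longrightarrow> f a b = 0" and Fd: "\<And>a b. a+b=d \<Longrightarrow> f a b = g a"
    and p: "0<p" and s: "p+q+r = 2*d"
  shows "ps3_mult (sub_yz f) (sub_x_yz f) p q r =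
    (\<Sum>b'\<le>q. if b' \<le> d \<and> d - b' \<le> r then g b' * of_nat ((q+r-d) choose (q-b')) * g p else 0)"
proof -
  obtain p' where pp: "p = Suc p'" using p by (cases p) auto
  have step1: "ps3_mult (sub_yz f) (sub_x_yz f) p q r =
     (\<Sum>b'\<le>q. \<Sum>c'\<le>r. f b' c' * (of_nat ((q-b'+(r-c')) choose (q-b')) * f p (q-b'+(r-c'))))"
    unfolding ps3_mult_def sub_yz_def sub_x_yz_def pp
    by (simp add: sum.atMost_Suc_shift del: sum.atMost_Suc)
  have inner: "(\<Sum>c'\<le>r. f b' c' * (of_nat ((q-b'+(r-c')) choose (q-b')) * f p (q-b'+(r-c'))))
     = (if b' \<le> d \<and> d - b' \<le> r then g b' * of_nat ((q+r-d) choose (q-b')) * g p else 0)"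
    if b': "b' \<le> q" for b'
  proof -
    have "(\<Sum>c'\<le>r. f b' c' * (of_nat ((q-b'+(r-c')) choose (q-b')) * f p (q-b'+(r-c'))))
       = (\<Sum>c'\<le>r. if c' = d - b' \<and> b' \<le> d then g b' * of_nat ((q+r-d) choose (q-b')) * g p else 0)"
    proof (rule sum.cong[OF refl])
      fix c' assume c': "c' \<in> {..r}"
      consider "b'+c'<d" | "b'+c'>d" | "b'+c'=d" by linarith
      then show "f b' c' * (of_nat ((q-b'+(r-c')) choose (q-b')) * f p (q-b'+(r-c')))
         = (if c' = d - b' \<and> b' \<le> d then g b' * of_nat ((q+r-d) choose (q-b')) * g p else 0)"
      proof cases
        case 1 then show ?thesis using F0[of b' c'] by auto
      next
        case 2
        have "p + (q-b'+(r-c')) < d" using 2 b' c' s by auto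
        then show ?thesis using F0[of p "q-b'+(r-c')"] 2 by auto
      next
        case 3
        have e1: "q-b'+(r-c') = q+r-d" using 3 b' c' s by auto
        have e2: "p + (q+r-d) = d" using 3 b' c' s by auto
        show ?thesis using 3 Fd[of b' c'] Fd[OF e2] e1 by auto
      qed
    qed
    also have "\<dots> = (if b' \<le> d \<and> d - b' \<le> r then g b' * of_nat ((q+r-d) choose (q-b')) * g p else 0)"
      by (cases "b' \<le> d") simp_all
    finally show ?thesis .
  qed
  show ?thesis unfolding step1 by (rule sum.cong[OF refl]) (use inner in auto)
qed

lemma Q2:
  fixes f :: "bit ps2" and g :: "nat \<Rightarrow> bit"
  assumes F0: "\<And>a b. a+b<d \<Longrightarrow> f a b = 0" and Fd: "\<And>a b. a+b=d \<Longrightarrow> f a b = g a"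
    and r: "0<r" and s: "p+q+r = 2*d"
  shows "ps3_mult (sub_xy_z f) (sub_xy f) p q r =
    (\<Sum>a'\<le>p. if a' + r \<le> d \<and> d - r - a' \<le> q then of_nat ((d-r) choose a') * g (d-r) * g (p-a') else 0)"
proof -
  have step1: "ps3_mult (sub_xy_z f) (sub_xy f) p q r =
     (\<Sum>a'\<le>p. \<Sum>b'\<le>q. of_nat ((a'+b') choose a') * f (a'+b') r * f (p-a') (q-b'))"
  proof -
    have "ps3_mult (sub_xy_z f) (sub_xy f) p q r =
     (\<Sum>a'\<le>p. \<Sum>b'\<le>q. \<Sum>c'\<le>r. if c' = r then of_nat ((a'+b') choose a') * f (a'+b') r * f (p-a') (q-b') else 0)"
      unfolding ps3_mult_def sub_xy_z_def sub_xy_def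
      apply (intro sum.cong refl)
      by auto
    then show ?thesis by simp
  qed
  have inner: "(\<Sum>b'\<le>q. of_nat ((a'+b') choose a') * f (a'+b') r * f (p-a') (q-b'))
     = (if a' + r \<le> d \<and> d - r - a' \<le> q then of_nat ((d-r) choose a') * g (d-r) * g (p-a') else 0)"
    if a': "a' \<le> p" for a'
  proof -
    have "(\<Sum>b'\<le>q. of_nat ((a'+b') choose a') * f (a'+b') r * f (p-a') (q-b'))
       = (\<Sum>b'\<le>q. if b' = d - r - a' \<and> a' + r \<le> d then of_nat ((d-r) choose a') * g (d-r) * g (p-a') else 0)"
    proof (rule sum.cong[OF refl])
      fix b' assume b': "b' \<in> {..q}"
      consider "a'+b'+r<d" | "a'+b'+r>d" | "a'+b'+r=d" by linarith
      then show "of_nat ((a'+b') choose a') * f (a'+b') r * f (p-a') (q-b')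
         = (if b' = d - r - a' \<and> a' + r \<le> d then of_nat ((d-r) choose a') * g (d-r) * g (p-a') else 0)"
      proof cases
        case 1 then show ?thesis using F0[of "a'+b'" r] by auto
      next
        case 2
        have "(p-a') + (q-b') < d" using 2 a' b' s by auto
        then show ?thesis using F0[of "p-a'" "q-b'"] 2 by auto
      next
        case 3
        have e1: "a'+b' = d-r" using 3 by auto
        have e2: "(p-a') + (q-b') = d" using 3 a' b' s by auto
        show ?thesis using 3 Fd[of "a'+b'" r] Fd[OF e2] e1 by auto
      qed
    qed
    also have "\<dots> = (if a' + r \<le> d \<and> d - r - a' \<le> q then of_nat ((d-r) choose a') * g (d-r) * g (p-a') else 0)"
      by (cases "a' + r \<le> d") simp_all
    finally show ?thesis .
  qed
  show ?thesis unfolding step1 by (rule sum.cong[OF refl]) (use inner in auto)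
qed

lemma bit_sq: "(x::bit) * x = x" by (cases x) auto

lemma core:
  fixes f :: "bit ps2" and A B :: nat and \<alpha> \<beta> :: bit
  assumes cocy: "Ga_Gm_cocycle2 f"
    and F0: "\<And>a b. a+b < A+B \<Longrightarrow> f a b = 0"
    and Fd0: "\<And>a b. a+b = A+B \<Longrightarrow> f a b = (if a = A then \<alpha> else if a = B then \<beta> else 0)"
    and A: "A = 2^i" and B: "B = 2^j" and ij: "i \<noteq> j" and ij2: "i \<noteq> Suc j"
  shows "\<alpha> = \<beta>"
proof -
  define d where "d = A + B"
  define g where "g a = (if a = A then \<alpha> else if a = B then \<beta> else 0)" for a
  have F0': "\<And>a b. a+b < d \<Longrightarrow> f a b = 0" using F0 d_def by auto
  have Fd: "\<And>a b. a+b = d \<Longrightarrow> f a b = g a" using Fd0 d_def g_def by auto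
  have Apos: "A > 0" and Bpos: "B > 0" using A B by auto
  have AB: "A \<noteq> B" using A B ij by simp
  have A2B: "A \<noteq> 2*B" using A B ij2 by (metis power_Suc power_inject_exp one_less_numeral_iff semiring_norm(76))
  have BA: "B < A \<Longrightarrow> 2*B \<le> A" using A B
    by (metis power_Suc power_increasing_iff power_strict_increasing_iff one_less_numeral_iff semiring_norm(76) Suc_leI)
  have c1: "(of_nat ((A + 2*B) choose A) :: bit) = 1"
  proof -
    have "2*B = 2^Suc j" using B by simp
    then show ?thesis using luc2[of i "Suc j" A] ij2 A AB Bpos A2B by auto
  qed
  have c2: "(of_nat ((2*B + A) choose (2*B)) :: bit) = 1"
  proof -
    have "2*B = 2^Suc j" using B by simp
    then show ?thesis using luc2[of "Suc j" i "2*B"] ij2 A AB Bpos A2B by auto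
  qed
  have c3: "(of_nat ((2*A) choose A) :: bit) = 0"
  proof -
    have "2*A = 2^Suc i" using A by simp
    then show ?thesis using luc1[of "Suc i" A] A Apos by auto
  qed
  have E: "of_nat ((q+r) choose q) * f p (q+r) + ps3_mult (sub_yz f) (sub_x_yz f) p q r
      = of_nat ((p+q) choose p) * f (p+q) r + ps3_mult (sub_xy_z f) (sub_xy f) p q r"
    if "p > 0" "r > 0" for p q r
  proof -
    have "gm_add3 (sub_yz f) (sub_x_yz f) p q r = gm_add3 (sub_xy_z f) (sub_xy f) p q r"
      using cocy unfolding Ga_Gm_cocycle2_def by simp
    then show ?thesis using that unfolding gm_add3_def by (simp add: sub_yz_def sub_x_yz_def sub_xy_z_def sub_xy_def)
  qed
  have Q1': "ps3_mult (sub_yz f) (sub_x_yz f) p q r =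
    (\<Sum>b'\<le>q. if b' \<le> d \<and> d - b' \<le> r then g b' * of_nat ((q+r-d) choose (q-b')) * g p else 0)"
    if "0<p" "p+q+r = 2*d" for p q r
    by (rule Q1[where d=d and g=g]) (use F0' Fd that in auto)
  have Q2': "ps3_mult (sub_xy_z f) (sub_xy f) p q r =
    (\<Sum>a'\<le>p. if a' + r \<le> d \<and> d - r - a' \<le> q then of_nat ((d-r) choose a') * g (d-r) * g (p-a') else 0)"
    if "0<r" "p+q+r = 2*d" for p q r
    by (rule Q2[where d=d and g=g]) (use F0' Fd that in auto)
  have s1: "A + A + 2*B = 2*d" using d_def by simp
  have q11: "ps3_mult (sub_yz f) (sub_x_yz f) A A (2*B) = \<alpha>"
  proof -
    have "ps3_mult (sub_yz f) (sub_x_yz f) A A (2*B) = (\<Sum>b'\<le>A. if b' \<le> d \<and> d - b' \<le> 2*B then g b' * of_nat ((A+2*B-d) choose (A-b')) * g A else 0)"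
      using Q1'[OF Apos s1] .
    also have "\<dots> = (if A \<le> d \<and> d - A \<le> 2*B then g A * of_nat ((A+2*B-d) choose (A-A)) * g A else 0)"
      by (rule sum_single) (use BA A2B AB in \<open>auto simp: g_def d_def\<close>)
    also have "\<dots> = \<alpha>" by (simp add: d_def g_def bit_sq)
    finally show ?thesis .
  qed
  have q12: "ps3_mult (sub_xy_z f) (sub_xy f) A A (2*B) = 0"
  proof -
    have "ps3_mult (sub_xy_z f) (sub_xy f) A A (2*B) = (\<Sum>a'\<le>A. if a' + 2*B \<le> d \<and> d - 2*B - a' \<le> A then of_nat ((d-2*B) choose a') * g (d-2*B) * g (A-a') else 0)"
      using Q2'[of "2*B" A A] Bpos s1 by simp
    also have "\<dots> = 0"
      by (rule sum.neutral) (use BA A2B AB Apos Bpos in \<open>auto simp: g_def d_def\<close>)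
    finally show ?thesis .
  qed
  have eq1: "f A (A + 2*B) = \<alpha>"
    using E[of A "2*B" A] Apos Bpos q11 q12 c1 c3
    by (cases "f A (A + 2*B)"; cases \<alpha>) (simp_all add: mult_2)
  have s2: "A + 2*B + A = 2*d" using d_def by simp
  have q21: "ps3_mult (sub_yz f) (sub_x_yz f) A (2*B) A = \<beta> * \<alpha>"
  proof -
    have "ps3_mult (sub_yz f) (sub_x_yz f) A (2*B) A = (\<Sum>b'\<le>2*B. if b' \<le> d \<and> d - b' \<le> A then g b' * of_nat ((2*B+A-d) choose (2*B-b')) * g A else 0)"
      using Q1'[OF Apos s2] .
    also have "\<dots> = (if B \<le> d \<and> d - B \<le> A then g B * of_nat ((2*B+A-d) choose (2*B-B)) * g A else 0)"
      by (rule sum_single) (use BA A2B AB in \<open>auto simp: g_def d_def\<close>)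
    also have "\<dots> = \<beta> * \<alpha>" using AB by (simp add: d_def g_def)
    finally show ?thesis .
  qed
  have q22: "ps3_mult (sub_xy_z f) (sub_xy f) A (2*B) A = \<beta> * \<alpha>"
  proof -
    have "ps3_mult (sub_xy_z f) (sub_xy f) A (2*B) A = (\<Sum>a'\<le>A. if a' + A \<le> d \<and> d - A - a' \<le> 2*B then of_nat ((d-A) choose a') * g (d-A) * g (A-a') else 0)"
      using Q2'[OF Apos s2] .
    also have "\<dots> = (if 0 + A \<le> d \<and> d - A - 0 \<le> 2*B then of_nat ((d-A) choose 0) * g (d-A) * g (A-0) else 0)"
      by (rule sum_single) (use BA A2B AB Apos Bpos in \<open>auto simp: g_def d_def\<close>)
    also have "\<dots> = \<beta> * \<alpha>" using AB by (simp add: d_def g_def)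
    finally show ?thesis .
  qed
  have eq2: "f A (A + 2*B) = f (A + 2*B) A"
  proof -
    have h: "of_nat ((2*B+A) choose (2*B)) * f A (2*B+A) + \<beta> * \<alpha> = of_nat ((A+2*B) choose A) * f (A+2*B) A + \<beta> * \<alpha>"
      using E[of A A "2*B"] Apos q21 q22 by simp
    then have "of_nat ((2*B+A) choose (2*B)) * f A (2*B+A) = of_nat ((A+2*B) choose A) * f (A+2*B) A"
      by (rule add_right_imp_eq)
    then show ?thesis unfolding c1 c2 mult_1 by (simp only: add.commute)
  qed
  have s3: "2*B + A + A = 2*d" using d_def by simp
  have B2pos: "0 < 2*B" using Bpos by simp
  have q31: "ps3_mult (sub_yz f) (sub_x_yz f) (2*B) A A = 0"
  proof -
    have "ps3_mult (sub_yz f) (sub_x_yz f) (2*B) A A = (\<Sum>b'\<le>A. if b' \<le> d \<and> d - b' \<le> A then g b' * of_nat ((A+A-d) choose (A-b')) * g (2*B) else 0)"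
      using Q1'[OF B2pos s3] .
    also have "\<dots> = 0"
      by (rule sum.neutral) (use A2B AB Bpos in \<open>auto simp: g_def\<close>)
    finally show ?thesis .
  qed
  have q32: "ps3_mult (sub_xy_z f) (sub_xy f) (2*B) A A = \<beta>"
  proof -
    have h0: "ps3_mult (sub_xy_z f) (sub_xy f) (2*B) A A = (\<Sum>a'\<le>2*B. if a' + A \<le> d \<and> d - A - a' \<le> A then of_nat ((d-A) choose a') * g (d-A) * g (2*B-a') else 0)"
      using Q2'[OF Apos s3] .
    have aux: "A \<noteq> 2*B - a'" if "a' \<le> B" "a' \<noteq> B" for a'
    proof
      assume h: "A = 2*B - a'"
      then have "B < A" using that by linarith
      then have "2*B \<le> A" by (rule BA)
      then show False using h that A2B by linarith
    qed
    have "(\<Sum>a'\<le>2*B. if a' + A \<le> d \<and> d - A - a' \<le> A then of_nat ((d-A) choose a') * g (d-A) * g (2*B-a') else 0) = (if B + A \<le> d \<and> d - A - B \<le> A then of_nat ((d-A) choose B) * g (d-A) * g (2*B-B) else 0)"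
    proof (rule sum_single)
      fix x assume x: "x \<le> 2*B" "x \<noteq> B"
      show "(if x + A \<le> d \<and> d - A - x \<le> A then of_nat ((d-A) choose x) * g (d-A) * g (2*B-x) else 0) = 0"
      proof (cases "x + A \<le> d")
        case True
        then have "x \<le> B" using d_def by simp
        then have "2*B - x \<noteq> A" "2*B - x \<noteq> B" using aux[of x] x by auto
        then show ?thesis by (simp add: g_def)
      qed simp
    qed simp
    also have "\<dots> = \<beta>" using AB by (simp add: d_def g_def bit_sq)
    finally show ?thesis by (rule trans[OF h0])
  qed
  have eq3: "f (A + 2*B) A = \<beta>"
  proof -
    have h: "of_nat ((A+A) choose A) * f (2*B) (A+A) + 0 = of_nat ((2*B+A) choose (2*B)) * f (2*B+A) A + \<beta>"
      using E[of "2*B" A A] Apos Bpos q31 q32 by simp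
    have c3': "(of_nat ((A+A) choose A)::bit) = 0" using c3 by (simp add: mult_2)
    have "0 = f (2*B+A) A + \<beta>" using h unfolding c3' c2 by simp
    then have "f (2*B+A) A = \<beta>" by (cases "f (2*B+A) A"; cases \<beta>) simp_all
    then show ?thesis by (simp add: add.commute)
  qed
  show ?thesis using eq1 eq2 eq3 by metis
qed


theorem mainTheorem6:
  fixes c :: bit and i j :: nat
  assumes "i \<noteq> j"
    and "extends_to_mult_cocycle c i j"
  shows "c ^ 2 = 0"
proof -
  define A where "A = (2::nat)^i"
  define B where "B = (2::nat)^j"
  obtain f e where cocy: "Ga_Gm_cocycle2 f"
    and F0: "\<And>a b. a + b < A + B \<Longrightarrow> f a b = 0"
    and Fd0: "\<And>a b. a + b = A + B \<Longrightarrow>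
           f a b = c * of_bool (a = A \<and> b = B) + add_cobdry_monom e (A + B) a b"
    using assms(2) unfolding extends_to_mult_cocycle_def A_def B_def by blast
  have AB: "A \<noteq> B" using assms(1) A_def B_def by simp
  have Apos: "A > 0" "B > 0" using A_def B_def by auto
  have Fd: "f a b = (if a = A then c + e else if a = B then e else 0)" if "a + b = A + B" for a b
  proof -
    have L: "(of_nat ((A+B) choose a)::bit) = of_bool (a=0) + of_bool (a=A) + of_bool (a=B) + of_bool (a=A+B)"
      using luc2[OF assms(1), of a] A_def B_def by simp
    have x: "(x::bit) + x = 0" for x by (cases x) auto
    have F: "f a b = c * of_bool (a = A) + e * (of_bool (a = 0) + of_bool (a=0) + of_bool (a=A) + of_bool (a=B) + of_bool (a=A+B) + of_bool (a = A+B))"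
      using Fd0[OF that] L that unfolding add_cobdry_monom_def by (auto simp: add.assoc)
    show ?thesis unfolding F using AB Apos by (cases c; cases e) auto
  qed
  have "c = 0"
  proof (cases "i = Suc j")
    case False
    have "c + e = e"
      by (rule core[OF cocy F0 Fd A_def B_def assms(1) False])
    then show ?thesis by (cases c; cases e) auto
  next
    case True
    have F0': "\<And>a b. a + b < B + A \<Longrightarrow> f a b = 0" using F0 by (simp add: add.commute)
    have Fd': "\<And>a b. a + b = B + A \<Longrightarrow> f a b = (if a = B then e else if a = A then c + e else 0)"
      using Fd AB by (simp add: add.commute)
    have "e = c + e"
      by (rule core[OF cocy F0' Fd' B_def A_def]) (use assms(1) True in auto)
    then show ?thesis by (cases c; cases e) auto
  qed
  then show ?thesis by simp
qed

end
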